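(* For all subsets $X_i, X_j \subseteq A$ the following hold: 1. $X_i \leadsto X_j$ if and only if for every $S' \subseteq S$: $\Psi_{X_i \cup X_j}(S') \subseteq \Psi_{X_i}(\Omega_{X_i \cup X_j}(S'))$; 2. $X_i \leadsto X_j$ if and only if for every $S' \subseteq S$: $\Psi_{X_i \cup X_j}(S') = \Psi_{X_i}(\Psi_{X_i \cup X_j}(S'))$.
   Context: Let $A$ be a finite set of agents. For each $a \in A$ let $S_a$ be a nonempty finite set, and let $S = \prod_{a \in A} S_a$ be the set of states. For each $a \in A$ let $\to_a \subseteq S \times S$ be a relation that is either empty or left-total (every state has at least one $\to_a$-successor), such that whenever $s \to_a s'$, either $s = s'$ or $s$ and $s'$ differ only in the $a$-component. For $X \subseteq A$ let $\to_X = \bigcup_{a \in X} \to_a$ (so $\to_\emptyset$ is empty) and let $\to_X^*$ be its reflexive-transitive closure. For $T \subseteq S$ write $(T \to_X) = \{ t' : \exists t \in T,\ t \to_X t'\}$. Orbit operator: $\Omega_X(S') = \{ s' : \exists s \in S',\ s \to_X^* s'\}$. Equilibria operator: $\Psi_X(S') = \{ s \in \Omega_X(S') : \forall s' \in S,\ s \to_X^* s' \implies s' \to_X^* s \}$. The modularity relation ($M$-relation) on subsets of $A$ is defined by: $X_i \leadsto X_j$ iff for every $S' \subseteq S$, letting $T = \Psi_{X_i}(\Psi_{X_i \cup X_j}(S'))$, one has $(T \to_{X_j}) \subseteq T$. *)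

theory Defs
  imports "HOL-Library.FuncSet"
begin

text \<open>States are functions from agents to local values; the state space is
  S = PiE A Sa. The agent relations are given by step :: agent => state relation.\<close>

definition stepX :: "('a \<Rightarrow> (('a \<Rightarrow> 'b) \<times> ('a \<Rightarrow> 'b)) set) \<Rightarrow> 'a set \<Rightarrow> (('a \<Rightarrow> 'b) \<times> ('a \<Rightarrow> 'b)) set" where
  "stepX step X = (\<Union>a\<in>X. step a)"

definition Omega :: "('a \<Rightarrow> (('a \<Rightarrow> 'b) \<times> ('a \<Rightarrow> 'b)) set) \<Rightarrow> 'a set \<Rightarrow> ('a \<Rightarrow> 'b) set \<Rightarrow> ('a \<Rightarrow> 'b) set" where
  "Omega step X S' = {s'. \<exists>s\<in>S'. (s, s') \<in> (stepX step X)\<^sup>*}"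

definition Psi :: "('a \<Rightarrow> (('a \<Rightarrow> 'b) \<times> ('a \<Rightarrow> 'b)) set) \<Rightarrow> ('a \<Rightarrow> 'b) set \<Rightarrow> 'a set \<Rightarrow> ('a \<Rightarrow> 'b) set \<Rightarrow> ('a \<Rightarrow> 'b) set" where
  "Psi step S X S' = {s \<in> Omega step X S'. \<forall>s'\<in>S. (s, s') \<in> (stepX step X)\<^sup>* \<longrightarrow> (s', s) \<in> (stepX step X)\<^sup>*}"

definition Mrel :: "('a \<Rightarrow> (('a \<Rightarrow> 'b) \<times> ('a \<Rightarrow> 'b)) set) \<Rightarrow> ('a \<Rightarrow> 'b) set \<Rightarrow> 'a set \<Rightarrow> 'a set \<Rightarrow> bool" where
  "Mrel step S Xi Xj = (\<forall>S'. S' \<subseteq> S \<longrightarrow>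
     (let T = Psi step S Xi (Psi step S (Xi \<union> Xj) S') in stepX step Xj `` T \<subseteq> T))"

end

theory Submission
  imports Defs
begin

lemma exists_rec:
  assumes fin: "finite S"
  shows "s \<in> S \<Longrightarrow> \<exists>t. (s,t) \<in> r\<^sup>* \<and> (\<forall>u\<in>S. (t,u) \<in> r\<^sup>* \<longrightarrow> (u,t) \<in> r\<^sup>*)"
proof (induction s rule: measure_induct_rule[of "\<lambda>s. card {u\<in>S. (s,u)\<in>r\<^sup>*}"])
  case (less s)
  show ?case
  proof (cases "\<forall>u\<in>S. (s,u) \<in> r\<^sup>* \<longrightarrow> (u,s) \<in> r\<^sup>*")
    case True then show ?thesis by blast
  next
    case False
    then obtain u where u: "u \<in> S" "(s,u) \<in> r\<^sup>*" "(u,s) \<notin> r\<^sup>*" by blast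
    have sub: "{v\<in>S. (u,v)\<in>r\<^sup>*} \<subset> {v\<in>S. (s,v)\<in>r\<^sup>*}"
      using u less.prems by (auto intro: rtrancl_trans)
    have "card {v\<in>S. (u,v)\<in>r\<^sup>*} < card {v\<in>S. (s,v)\<in>r\<^sup>*}"
      by (rule psubset_card_mono) (use fin sub in auto)
    from less.IH[OF this u(1)] obtain t where "(u,t) \<in> r\<^sup>*" "\<forall>v\<in>S. (t,v) \<in> r\<^sup>* \<longrightarrow> (v,t) \<in> r\<^sup>*"
      by blast
    then show ?thesis using u(2) by (meson rtrancl_trans)
  qed
qed

lemma stepX_mono: "X \<subseteq> Y \<Longrightarrow> stepX step X \<subseteq> stepX step Y"
  unfolding stepX_def by auto

lemma rt_mono: "X \<subseteq> Y \<Longrightarrow> (s,t) \<in> (stepX step X)\<^sup>* \<Longrightarrow> (s,t) \<in> (stepX step Y)\<^sup>*"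
  using rtrancl_mono[OF stepX_mono] by blast

theorem proposition2:
  fixes A :: "'a set" and Sa :: "'a \<Rightarrow> 'b set" and S :: "('a \<Rightarrow> 'b) set"
    and step :: "'a \<Rightarrow> (('a \<Rightarrow> 'b) \<times> ('a \<Rightarrow> 'b)) set"
    and Xi Xj :: "'a set"
  assumes "finite A"
    and "\<forall>a\<in>A. Sa a \<noteq> {} \<and> finite (Sa a)"
    and "S = PiE A Sa"
    and "\<forall>a\<in>A. step a \<subseteq> S \<times> S"
    and "\<forall>a\<in>A. step a = {} \<or> (\<forall>s\<in>S. \<exists>s'. (s, s') \<in> step a)"
    and "\<forall>a\<in>A. \<forall>s s'. (s, s') \<in> step a \<longrightarrow> s = s' \<or> (\<forall>b. b \<noteq> a \<longrightarrow> s b = s' b)"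
    and "Xi \<subseteq> A" and "Xj \<subseteq> A"
  shows "(Mrel step S Xi Xj \<longleftrightarrow>
            (\<forall>S'. S' \<subseteq> S \<longrightarrow> Psi step S (Xi \<union> Xj) S' \<subseteq> Psi step S Xi (Omega step (Xi \<union> Xj) S')))
       \<and> (Mrel step S Xi Xj \<longleftrightarrow>
            (\<forall>S'. S' \<subseteq> S \<longrightarrow> Psi step S (Xi \<union> Xj) S' = Psi step S Xi (Psi step S (Xi \<union> Xj) S')))"
proof -
  define U where "U = Xi \<union> Xj"
  have finS: "finite S" using assms(1,2,3) by (simp add: finite_PiE)
  have stepS: "stepX step U \<subseteq> S \<times> S" using assms(4,7,8) unfolding U_def stepX_def by blast
  have inS: "(s,t) \<in> (stepX step U)\<^sup>* \<Longrightarrow> s \<in> S \<Longrightarrow> t \<in> S" for s t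
    by (induction rule: rtrancl_induct) (use stepS in auto)
  have XiU: "Xi \<subseteq> U" and XjU: "Xj \<subseteq> U" unfolding U_def by auto
  define recX where "recX X s \<longleftrightarrow> (\<forall>s'\<in>S. (s, s') \<in> (stepX step X)\<^sup>* \<longrightarrow> (s', s) \<in> (stepX step X)\<^sup>*)" for X s
  have PsiE: "Psi step S X S' = {s \<in> Omega step X S'. recX X s}" for X S'
    unfolding Psi_def recX_def by simp
  have Pclos: "s \<in> Psi step S U S' \<Longrightarrow> (s,t) \<in> (stepX step U)\<^sup>* \<Longrightarrow> t \<in> Psi step S U S'" for s t S'
    unfolding PsiE recX_def Omega_def by (auto intro: rtrancl_trans)
  have TsubP: "Psi step S Xi (Psi step S U S') \<subseteq> Psi step S U S'" for S'
  proof
    fix x assume "x \<in> Psi step S Xi (Psi step S U S')"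
    then obtain p where "p \<in> Psi step S U S'" "(p,x) \<in> (stepX step Xi)\<^sup>*"
      unfolding PsiE Omega_def by auto
    then show "x \<in> Psi step S U S'" using Pclos rt_mono[OF XiU] by blast
  qed
  define Q where "Q \<longleftrightarrow> (\<forall>S'. S' \<subseteq> S \<longrightarrow> (\<forall>s\<in>Psi step S U S'. recX Xi s))"
  have PinOm: "s \<in> Psi step S U S' \<Longrightarrow> s \<in> Omega step X (Psi step S U S')" for s S' X
    unfolding Omega_def by auto
  have PinOm2: "s \<in> Psi step S U S' \<Longrightarrow> s \<in> Omega step Xi (Omega step U S')" for s S'
    unfolding Omega_def PsiE by auto
  have C1: "(\<forall>S'. S' \<subseteq> S \<longrightarrow> Psi step S U S' \<subseteq> Psi step S Xi (Omega step U S')) \<longleftrightarrow> Q"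
    unfolding Q_def using PinOm2 by (auto simp: PsiE[of Xi])
  have C2: "(\<forall>S'. S' \<subseteq> S \<longrightarrow> Psi step S U S' = Psi step S Xi (Psi step S U S')) \<longleftrightarrow> Q"
  proof -
    have "Psi step S U S' = Psi step S Xi (Psi step S U S') \<longleftrightarrow> (\<forall>s\<in>Psi step S U S'. recX Xi s)" for S'
      using TsubP[of S'] PinOm[of _ S' Xi] by (auto simp: PsiE[of Xi "Psi step S U S'"])
    then show ?thesis unfolding Q_def by simp
  qed
  have M: "Mrel step S Xi Xj \<longleftrightarrow> Q"
  proof
    assume Q
    show "Mrel step S Xi Xj"
      unfolding Mrel_def Let_def U_def[symmetric]
    proof (intro allI impI)
      fix S' :: "('a \<Rightarrow> 'b) set" assume S': "S' \<subseteq> S"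
      have eq: "Psi step S Xi (Psi step S U S') = Psi step S U S'"
        using C2 \<open>Q\<close> S' by blast
      show "stepX step Xj `` Psi step S Xi (Psi step S U S') \<subseteq> Psi step S Xi (Psi step S U S')"
        unfolding eq using Pclos stepX_mono[OF XjU] by blast
    qed
  next
    assume Mr: "Mrel step S Xi Xj"
    show Q unfolding Q_def
    proof (intro allI impI ballI)
      fix S' s assume S': "S' \<subseteq> S" and sP: "s \<in> Psi step S U S'"
      have sS: "s \<in> S" using sP S' inS unfolding PsiE Omega_def by blast
      have recU: "recX U s" using sP unfolding PsiE by blast
      define P where "P = Psi step S U {s}"
      define T where "T = Psi step S Xi P"
      have sP2: "s \<in> P" unfolding P_def PsiE Omega_def using recU by auto
      obtain t where st: "(s,t) \<in> (stepX step Xi)\<^sup>*" and rt: "recX Xi t"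
        using exists_rec[OF finS sS, of "stepX step Xi"] unfolding recX_def by blast
      have tT: "t \<in> T" unfolding T_def PsiE Omega_def using rt st sP2 by blast
      have tS: "t \<in> S" using inS[OF rt_mono[OF XiU st] sS] .
      have ts: "(t,s) \<in> (stepX step U)\<^sup>*" using recU rt_mono[OF XiU st] tS unfolding recX_def by blast
      have TXj: "stepX step Xj `` T \<subseteq> T"
        using Mr sS unfolding Mrel_def Let_def T_def P_def U_def by (meson empty_subsetI insert_subset)
      have TXi: "stepX step Xi `` T \<subseteq> T"
      proof
        fix y assume "y \<in> stepX step Xi `` T"
        then obtain x where x: "x \<in> T" "(x,y) \<in> stepX step Xi" by blast
        then have xy: "(x,y) \<in> (stepX step Xi)\<^sup>*" by blast
        have "y \<in> Omega step Xi P" using x(1) xy unfolding T_def PsiE Omega_def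
          by (auto intro: rtrancl_trans)
        moreover have "recX Xi y" using x(1) xy unfolding T_def PsiE recX_def
          by (auto intro: rtrancl_trans)
        ultimately show "y \<in> T" unfolding T_def PsiE by blast
      qed
      have TU: "stepX step U `` T \<subseteq> T"
        using TXi TXj unfolding U_def stepX_def by blast
      have "(t,s) \<in> (stepX step U)\<^sup>* \<Longrightarrow> t \<in> T \<Longrightarrow> s \<in> T" for t s
        by (induction rule: rtrancl_induct) (use TU in auto)
      with ts tT have "s \<in> T" by blast
      then show "recX Xi s" unfolding T_def PsiE by blast
    qed
  qed
  show ?thesis using C1 C2 M unfolding U_def by blast
qed

end
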